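(* Let $G$ be a vertex-weighted complex digraph (as defined in the context). Then the underlying undirected graph of $G$ is connected if and only if the algebraic multiplicity of the eigenvalue $0$ of the combinatorial Laplacian $L(G)$ is exactly $1$.
   Context: A vertex-weighted complex digraph is $G=(V,E)$ with $V=\{1,\dots,n\}$, $E\subseteq\{(i,j)\in V\times V:i\neq j\}$ such that for $i\neq j$ at most one of $(i,j),(j,i)$ lies in $E$, together with nonzero complex vertex weights $w_1,\dots,w_n\in\mathbb C\setminus\{0\}$; for each $i$ fix a square root $s_i$ with $s_i^2=w_i$. Vertices $i\neq j$ are adjacent iff $(i,j)\in E$ or $(j,i)\in E$. The adjacency matrix $A(G)$ has $A_{ij}=\overline{s_i}\,s_j$ if $i,j$ are adjacent and $A_{ij}=0$ otherwise. The degree of vertex $i$ is $d_i=\sum_{j \text{ adjacent to } i}|w_j|$, $D(G)=\mathrm{diag}(d_1,\dots,d_n)$, the combinatorial Laplacian is $L(G)=D(G)-A(G)$ and the signless Laplacian is $Q(G)=D(G)+A(G)$; both are Hermitian positive semidefinite. Connectivity, connected components and cycles refer to the underlying undirected graph. *)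

theory Defs
  imports "Jordan_Normal_Form.Char_Poly"
begin

text \<open>Vertices are 0,...,n-1 (a relabelling of 1,...,n, matching matrix indexing).\<close>

definition adjacent :: "(nat \<times> nat) set \<Rightarrow> nat \<Rightarrow> nat \<Rightarrow> bool" where
  "adjacent E i j \<longleftrightarrow> (i, j) \<in> E \<or> (j, i) \<in> E"

definition vw_complex_digraph ::
  "nat \<Rightarrow> (nat \<times> nat) set \<Rightarrow> (nat \<Rightarrow> complex) \<Rightarrow> (nat \<Rightarrow> complex) \<Rightarrow> bool" where
  "vw_complex_digraph n E w s \<longleftrightarrow>
     E \<subseteq> {0..<n} \<times> {0..<n} \<and>
     (\<forall>(i, j) \<in> E. i \<noteq> j) \<and>
     (\<forall>i j. (i, j) \<in> E \<longrightarrow> (j, i) \<notin> E) \<and>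
     (\<forall>i < n. w i \<noteq> 0) \<and>
     (\<forall>i < n. (s i)\<^sup>2 = w i)"

definition adj_matrix :: "nat \<Rightarrow> (nat \<times> nat) set \<Rightarrow> (nat \<Rightarrow> complex) \<Rightarrow> complex mat" where
  "adj_matrix n E s = mat n n (\<lambda>(i, j). if adjacent E i j then cnj (s i) * s j else 0)"

definition vdegree :: "nat \<Rightarrow> (nat \<times> nat) set \<Rightarrow> (nat \<Rightarrow> complex) \<Rightarrow> nat \<Rightarrow> real" where
  "vdegree n E w i = (\<Sum>j \<in> {j. j < n \<and> adjacent E i j}. cmod (w j))"

definition degree_matrix :: "nat \<Rightarrow> (nat \<times> nat) set \<Rightarrow> (nat \<Rightarrow> complex) \<Rightarrow> complex mat" where
  "degree_matrix n E w = mat n n (\<lambda>(i, j). if i = j then complex_of_real (vdegree n E w i) else 0)"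

definition laplacian ::
  "nat \<Rightarrow> (nat \<times> nat) set \<Rightarrow> (nat \<Rightarrow> complex) \<Rightarrow> (nat \<Rightarrow> complex) \<Rightarrow> complex mat" where
  "laplacian n E w s = degree_matrix n E w - adj_matrix n E s"

definition underlying_connected :: "nat \<Rightarrow> (nat \<times> nat) set \<Rightarrow> bool" where
  "underlying_connected n E \<longleftrightarrow>
     (\<forall>i < n. \<forall>j < n. (i, j) \<in> {(a, b). a < n \<and> b < n \<and> adjacent E a b}\<^sup>*)"

definition alg_multiplicity :: "complex mat \<Rightarrow> complex \<Rightarrow> nat" where
  "alg_multiplicity A c = order c (char_poly A)"

end

theory Submission
  imports Defs "Jordan_Normal_Form.Jordan_Normal_Form_Uniqueness" "Jordan_Normal_Form.Jordan_Normal_Form_Existence"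
begin


lemma herm_ker2:
  fixes H :: "complex mat"
  assumes H: "H \<in> carrier_mat n n"
    and herm: "\<And>i j. i < n \<Longrightarrow> j < n \<Longrightarrow> H $$ (i,j) = cnj (H $$ (j,i))"
    and v: "v \<in> carrier_vec n"
    and z: "H *\<^sub>v (H *\<^sub>v v) = 0\<^sub>v n"
  shows "H *\<^sub>v v = 0\<^sub>v n"
proof -
  define w where "w = H *\<^sub>v v"
  have wc: "w \<in> carrier_vec n" using H v w_def by auto
  have wi: "w $ i = (\<Sum>j<n. H $$ (i,j) * v $ j)" if "i < n" for i
    using that H v unfolding w_def by (auto simp: scalar_prod_def lessThan_atLeast0)
  have hw: "(\<Sum>i<n. H $$ (j,i) * w $ i) = 0" if "j < n" for j
  proof -
    have "(H *\<^sub>v w) $ j = 0" using z that unfolding w_def by simp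
    thus ?thesis using that H wc by (auto simp: scalar_prod_def lessThan_atLeast0)
  qed
  have "(\<Sum>i<n. cnj (w $ i) * w $ i) = (\<Sum>i<n. cnj (w $ i) * (\<Sum>j<n. H $$ (i,j) * v $ j))"
    using wi by simp
  also have "\<dots> = (\<Sum>i<n. \<Sum>j<n. cnj (w $ i) * H $$ (i,j) * v $ j)"
    by (simp add: sum_distrib_left mult.assoc)
  also have "\<dots> = (\<Sum>j<n. \<Sum>i<n. cnj (w $ i) * H $$ (i,j) * v $ j)"
    by (rule sum.swap)
  also have "\<dots> = (\<Sum>j<n. v $ j * cnj (\<Sum>i<n. H $$ (j,i) * w $ i))"
  proof (rule sum.cong[OF refl])
    fix j assume j: "j \<in> {..<n}"
    have "v $ j * cnj (\<Sum>i<n. H $$ (j,i) * w $ i) = v $ j * (\<Sum>i<n. cnj (H $$ (j,i)) * cnj (w $ i))"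
      by (simp add: cnj_sum)
    also have "\<dots> = v $ j * (\<Sum>i<n. H $$ (i,j) * cnj (w $ i))"
      using j by (intro arg_cong[where f="\<lambda>x. v $ j * x"] sum.cong) (auto simp: herm[symmetric])
    finally show "(\<Sum>i<n. cnj (w $ i) * H $$ (i,j) * v $ j) = v $ j * cnj (\<Sum>i<n. H $$ (j,i) * w $ i)"
      by (simp add: sum_distrib_left mult.commute mult.left_commute)
  qed
  also have "\<dots> = 0" using hw by simp
  finally have s0: "(\<Sum>i<n. cnj (w $ i) * w $ i) = 0" .
  have "(\<Sum>i<n. cnj (w $ i) * w $ i) = (\<Sum>i<n. complex_of_real ((cmod (w $ i))\<^sup>2))"
    by (rule sum.cong[OF refl]) (metis complex_norm_square mult.commute of_real_power)
  also have "\<dots> = complex_of_real (\<Sum>i<n. (cmod (w $ i))\<^sup>2)" by simp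
  finally have "(\<Sum>i<n. cnj (w $ i) * w $ i) = complex_of_real (\<Sum>i<n. (cmod (w $ i))\<^sup>2)" .
  with s0 have "complex_of_real (\<Sum>i<n. (cmod (w $ i))\<^sup>2) = 0" by simp
  hence "(\<Sum>i<n. (cmod (w $ i))\<^sup>2) = 0" by (simp only: of_real_eq_0_iff)
  hence "\<forall>i\<in>{..<n}. (cmod (w $ i))\<^sup>2 = 0"
    by (subst sum_nonneg_eq_0_iff[symmetric]) auto
  hence "w $ i = 0" if "i < n" for i using that by auto
  thus ?thesis using wc unfolding w_def[symmetric] by (intro eq_vecI) auto
qed



lemma sum_min_list: "sum_list (map (min 1) xs) \<le> sum_list (map (min (2::nat)) xs)"
  by (induct xs) auto

lemma sum_min_list_eq: "sum_list (map (min (2::nat)) xs) = sum_list (map (min 1) xs) \<Longrightarrow>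
  sum_list xs = sum_list (map (min 1) xs)"
proof (induct xs)
  case (Cons x xs)
  have "sum_list (map (min 1) xs) \<le> sum_list (map (min 2) xs)" by (rule sum_min_list)
  with Cons.prems have "min 2 x = min 1 x" "sum_list (map (min 2) xs) = sum_list (map (min 1) xs)" by auto
  with Cons.hyps show ?case by auto
qed simp

lemma char_matrix_0: "A \<in> carrier_mat n n \<Longrightarrow> char_matrix A 0 = A"
  unfolding char_matrix_def by auto

lemma kernel_dim_cong: "mat_kernel A = mat_kernel B \<Longrightarrow> dim_col A = dim_col B \<Longrightarrow> kernel_dim A = kernel_dim B"
  unfolding kernel_dim_def by simp

lemma order_eq_kernel_dim:
  fixes A :: "complex mat"
  assumes A: "A \<in> carrier_mat n n" and K: "mat_kernel (A * A) = mat_kernel A"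
  shows "Polynomial.order 0 (char_poly A) = kernel_dim A"
proof -
  from char_poly_factorized[OF A] obtain as where "char_poly A = (\<Prod>a\<leftarrow>as. [:- a, 1:])" by auto
  from jordan_nf_exists[OF A this] obtain n_as where jnf: "jordan_nf A n_as" ..
  define xs where "xs = map fst (filter (\<lambda>na. snd na = 0) n_as)"
  have xs': "map fst [(n, e)\<leftarrow>n_as . e = 0] = xs" unfolding xs_def
    by (simp add: case_prod_beta')
  have o: "Polynomial.order 0 (char_poly A) = sum_list xs" unfolding xs_def by (rule jordan_nf_order[OF jnf])
  have d: "dim_gen_eigenspace A 0 k = sum_list (map (min k) xs)" for k
    using dim_gen_eigenspace[OF jnf, of 0 k] unfolding xs' by simp
  have p1: "char_matrix A 0 ^\<^sub>m 1 = A" using A by (simp add: char_matrix_0)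
  have p2: "char_matrix A 0 ^\<^sub>m 2 = A * A" using A by (simp add: char_matrix_0 numeral_2_eq_2)
  have d1: "dim_gen_eigenspace A 0 1 = kernel_dim A" unfolding dim_gen_eigenspace_def p1 ..
  have d2: "dim_gen_eigenspace A 0 2 = kernel_dim A" unfolding dim_gen_eigenspace_def p2
    by (rule kernel_dim_cong[OF K]) (use A in auto)
  from d1 d2 d have "sum_list (map (min 2) xs) = sum_list (map (min 1) xs)" by metis
  from sum_min_list_eq[OF this] o d[of 1] d1 show ?thesis by simp
qed



lemma G_s_nz: "vw_complex_digraph n E w s \<Longrightarrow> i < n \<Longrightarrow> s i \<noteq> 0"
  unfolding vw_complex_digraph_def by (metis power_zero_numeral)

lemma G_ss: "vw_complex_digraph n E w s \<Longrightarrow> i < n \<Longrightarrow> s i * cnj (s i) = complex_of_real (cmod (w i))"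
proof -
  assume G: "vw_complex_digraph n E w s" and i: "i < n"
  hence "w i = (s i)\<^sup>2" unfolding vw_complex_digraph_def by auto
  hence "cmod (w i) = (cmod (s i))\<^sup>2" by (simp add: norm_power)
  thus ?thesis by (metis complex_norm_square of_real_power)
qed

lemma adj_sym: "adjacent E i j = adjacent E j i"
  unfolding adjacent_def by auto

lemma G_adj_irrefl: "vw_complex_digraph n E w s \<Longrightarrow> \<not> adjacent E i i"
  unfolding vw_complex_digraph_def adjacent_def by auto

lemma L_carrier: "laplacian n E w s \<in> carrier_mat n n"
  unfolding laplacian_def degree_matrix_def adj_matrix_def by auto

lemma L_entry: "i < n \<Longrightarrow> j < n \<Longrightarrow> laplacian n E w s $$ (i,j) =
   (if i = j then complex_of_real (vdegree n E w i) else 0) - (if adjacent E i j then cnj (s i) * s j else 0)"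
  unfolding laplacian_def degree_matrix_def adj_matrix_def by auto

lemma L_herm: "vw_complex_digraph n E w s \<Longrightarrow> i < n \<Longrightarrow> j < n \<Longrightarrow>
   laplacian n E w s $$ (i,j) = cnj (laplacian n E w s $$ (j,i))"
  by (auto simp: L_entry adj_sym)

lemma L_mult:
  assumes G: "vw_complex_digraph n E w s" and v: "v \<in> carrier_vec n" and i: "i < n"
  shows "(laplacian n E w s *\<^sub>v v) $ i = cnj (s i) *
     (\<Sum>j\<in>{j. j < n \<and> adjacent E i j}. complex_of_real (cmod (w j)) * (v $ i / cnj (s i) - v $ j / cnj (s j)))"
proof -
  let ?N = "{j. j < n \<and> adjacent E i j}"
  have N: "?N = {j \<in> {0..<n}. adjacent E i j}" by auto
  have fin: "finite ?N" by auto
  have "(laplacian n E w s *\<^sub>v v) $ i = (\<Sum>j\<in>{0..<n}. laplacian n E w s $$ (i,j) * v $ j)"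
    using v i L_carrier[of n E w s] by (simp add: scalar_prod_def)
  also have "\<dots> = (\<Sum>j\<in>{0..<n}. (if i = j then complex_of_real (vdegree n E w i) * v $ j else 0))
      - (\<Sum>j\<in>{0..<n}. (if adjacent E i j then cnj (s i) * s j * v $ j else 0))"
    unfolding sum_subtractf[symmetric] using i by (intro sum.cong) (auto simp: L_entry left_diff_distrib)
  also have "(\<Sum>j\<in>{0..<n}. (if i = j then complex_of_real (vdegree n E w i) * v $ j else 0))
     = complex_of_real (vdegree n E w i) * v $ i" using i by simp
  also have "\<dots> = (\<Sum>j\<in>?N. complex_of_real (cmod (w j)) * v $ i)"
    unfolding vdegree_def by (simp add: sum_distrib_right)
  also have "(\<Sum>j\<in>{0..<n}. (if adjacent E i j then cnj (s i) * s j * v $ j else 0))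
     = (\<Sum>j\<in>?N. cnj (s i) * s j * v $ j)"
    by (subst N, rule sum.inter_filter[symmetric]) simp
  finally have 1: "(laplacian n E w s *\<^sub>v v) $ i =
     (\<Sum>j\<in>?N. complex_of_real (cmod (w j)) * v $ i - cnj (s i) * s j * v $ j)"
    by (simp add: sum_subtractf)
  have 2: "complex_of_real (cmod (w j)) * v $ i - cnj (s i) * s j * v $ j
     = cnj (s i) * (complex_of_real (cmod (w j)) * (v $ i / cnj (s i) - v $ j / cnj (s j)))"
    if j: "j \<in> ?N" for j
  proof -
    from j have jn: "j < n" by auto
    have si: "cnj (s i) \<noteq> 0" using G_s_nz[OF G i] by simp
    have sj: "cnj (s j) \<noteq> 0" using G_s_nz[OF G jn] by simp
    show ?thesis using si sj unfolding G_ss[OF G jn, symmetric]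
      by (simp add: field_simps)
  qed
  show ?thesis unfolding 1 sum_distrib_left by (rule sum.cong[OF refl 2])
qed

lemma G_c_pos: "vw_complex_digraph n E w s \<Longrightarrow> i < n \<Longrightarrow> cmod (w i) > 0"
  unfolding vw_complex_digraph_def by auto

lemma L_ker:
  assumes G: "vw_complex_digraph n E w s" and v: "v \<in> carrier_vec n"
  shows "laplacian n E w s *\<^sub>v v = 0\<^sub>v n \<longleftrightarrow>
    (\<forall>i<n. \<forall>j<n. adjacent E i j \<longrightarrow> v $ i / cnj (s i) = v $ j / cnj (s j))"
proof -
  define y where "y k = v $ k / cnj (s k)" for k
  define c where "c k = cmod (w k)" for k
  have Lm: "(laplacian n E w s *\<^sub>v v) $ i = cnj (s i) *
     (\<Sum>j\<in>{j. j < n \<and> adjacent E i j}. complex_of_real (c j) * (y i - y j))" if "i < n" for i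
    unfolding y_def c_def by (rule L_mult[OF G v that])
  have dimL: "laplacian n E w s *\<^sub>v v \<in> carrier_vec n" using L_carrier[of n E w s] v by auto
  show ?thesis
  proof
    assume H: "\<forall>i<n. \<forall>j<n. adjacent E i j \<longrightarrow> v $ i / cnj (s i) = v $ j / cnj (s j)"
    show "laplacian n E w s *\<^sub>v v = 0\<^sub>v n"
    proof (rule eq_vecI)
      fix i assume "i < dim_vec (0\<^sub>v n :: complex vec)"
      hence i: "i < n" by simp
      have "(\<Sum>j\<in>{j. j < n \<and> adjacent E i j}. complex_of_real (c j) * (y i - y j)) = 0"
        by (rule sum.neutral) (use H i in \<open>auto simp: y_def\<close>)
      thus "(laplacian n E w s *\<^sub>v v) $ i = 0\<^sub>v n $ i" using Lm[OF i] i by simp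
    qed (use dimL L_carrier[of n E w s] in auto)
  next
    assume Z: "laplacian n E w s *\<^sub>v v = 0\<^sub>v n"
    have S: "(\<Sum>j\<in>{j. j < n \<and> adjacent E i j}. complex_of_real (c j) * (y i - y j)) = 0" if i: "i < n" for i
    proof -
      have "cnj (s i) * (\<Sum>j\<in>{j. j < n \<and> adjacent E i j}. complex_of_real (c j) * (y i - y j)) = 0"
        using Lm[OF i] Z i by (metis index_zero_vec(1))
      thus ?thesis using G_s_nz[OF G i] by simp
    qed
    define T where "T i j = (if adjacent E i j then complex_of_real (c i * c j) * (cnj (y i) * (y i - y j)) else 0)" for i j
    have Ti: "(\<Sum>j<n. T i j) = 0" if i: "i < n" for i
    proof -
      have N: "{j. j < n \<and> adjacent E i j} = {j \<in> {..<n}. adjacent E i j}" by auto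
      have "(\<Sum>j<n. T i j) = (\<Sum>j\<in>{j. j < n \<and> adjacent E i j}. complex_of_real (c i * c j) * (cnj (y i) * (y i - y j)))"
        unfolding T_def by (subst N, rule sum.inter_filter[symmetric]) simp
      also have "\<dots> = complex_of_real (c i) * cnj (y i) * (\<Sum>j\<in>{j. j < n \<and> adjacent E i j}. complex_of_real (c j) * (y i - y j))"
        unfolding sum_distrib_left by (rule sum.cong) (auto simp: algebra_simps)
      also have "\<dots> = 0" using S[OF i] by simp
      finally show ?thesis .
    qed
    have Q0: "(\<Sum>i<n. \<Sum>j<n. T i j) = 0" using Ti by simp
    have Q1: "(\<Sum>i<n. \<Sum>j<n. T j i) = 0" using Q0 sum.swap[of "\<lambda>i j. T i j" "{..<n}" "{..<n}"] by simp
    define R where "R i j = (if adjacent E i j then c i * c j * (cmod (y i - y j))\<^sup>2 else 0)" for i j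
    have TR: "T i j + T j i = complex_of_real (R i j)" for i j
    proof (cases "adjacent E i j")
      case True
      hence True': "adjacent E j i" by (simp add: adj_sym)
      have "complex_of_real ((cmod (y i - y j))\<^sup>2) = (y i - y j) * (cnj (y i) - cnj (y j))"
        by (metis complex_cnj_diff complex_norm_square of_real_power)
      hence e: "cnj (y i) * (y i - y j) + cnj (y j) * (y j - y i) = complex_of_real ((cmod (y i - y j))\<^sup>2)"
        by (simp add: algebra_simps)
      have "T i j + T j i = complex_of_real (c i * c j) * (cnj (y i) * (y i - y j) + cnj (y j) * (y j - y i))"
        unfolding T_def using True True' by (simp add: distrib_left mult.commute)
      also have "\<dots> = complex_of_real (R i j)" unfolding e R_def using True by simp
      finally show ?thesis .
    next
      case False
      hence "\<not> adjacent E j i" by (simp add: adj_sym)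
      with False show ?thesis unfolding T_def R_def by simp
    qed
    have "(\<Sum>i<n. \<Sum>j<n. complex_of_real (R i j)) = 0"
      using Q0 Q1 unfolding TR[symmetric] by (simp add: sum.distrib)
    hence "complex_of_real (\<Sum>i<n. \<Sum>j<n. R i j) = 0"
      by (simp only: of_real_sum)
    hence R0: "(\<Sum>i<n. \<Sum>j<n. R i j) = 0" by (simp only: of_real_eq_0_iff)
    have Rnn: "R i j \<ge> 0" for i j unfolding R_def c_def by auto
    show "\<forall>i<n. \<forall>j<n. adjacent E i j \<longrightarrow> v $ i / cnj (s i) = v $ j / cnj (s j)"
    proof (intro allI impI)
      fix i j assume i: "i < n" and j: "j < n" and a: "adjacent E i j"
      have "\<forall>i\<in>{..<n}. (\<Sum>j<n. R i j) = 0"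
        using R0 by (subst sum_nonneg_eq_0_iff[symmetric]) (auto intro: sum_nonneg Rnn)
      hence "(\<Sum>j<n. R i j) = 0" using i by auto
      hence "\<forall>j\<in>{..<n}. R i j = 0" by (subst sum_nonneg_eq_0_iff[symmetric]) (auto intro: Rnn)
      hence "R i j = 0" using j by auto
      moreover have "c i > 0" "c j > 0" unfolding c_def using G_c_pos[OF G] i j by auto
      ultimately have "cmod (y i - y j) = 0" using a unfolding R_def by simp
      thus "v $ i / cnj (s i) = v $ j / cnj (s j)" unfolding y_def by simp
    qed
  qed
qed



lemma ker_const:
  assumes G: "vw_complex_digraph n E w s" and v: "v \<in> carrier_vec n"
    and Z: "laplacian n E w s *\<^sub>v v = 0\<^sub>v n"
    and ab: "(a, b) \<in> {(a, b). a < n \<and> b < n \<and> adjacent E a b}\<^sup>*"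
  shows "v $ a / cnj (s a) = v $ b / cnj (s b)"
  using ab
proof (induct rule: rtrancl_induct)
  case (step b c)
  with L_ker[OF G v] Z show ?case by auto
qed simp

lemma lincomb_single:
  fixes A :: "complex mat"
  assumes A: "A \<in> carrier_mat n n" and b: "b \<in> mat_kernel A"
  shows "kernel.lincomb n A f {b} = f b \<cdot>\<^sub>v b"
proof -
  interpret K: kernel n n A by unfold_locales (rule A)
  show ?thesis using b K.Ker.smult_closed[of "f b" b] unfolding K.Ker.lincomb_def by (simp add: K.Ker.finsum_insert)
qed

lemma connected_dim:
  assumes G: "vw_complex_digraph n E w s" and n: "n \<ge> 1" and conn: "underlying_connected n E"
  shows "kernel_dim (laplacian n E w s) = 1"
proof -
  let ?L = "laplacian n E w s"
  have Lc: "?L \<in> carrier_mat n n" by (rule L_carrier)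
  interpret K: kernel n n ?L by unfold_locales (rule Lc)
  define u where "u = vec n (\<lambda>i. cnj (s i))"
  have uc: "u \<in> carrier_vec n" unfolding u_def by simp
  have uz: "?L *\<^sub>v u = 0\<^sub>v n"
    using G_s_nz[OF G] by (subst L_ker[OF G uc]) (auto simp: u_def)
  have uK: "u \<in> mat_kernel ?L" by (rule mat_kernelI[OF Lc uc uz])
  have un: "u \<noteq> 0\<^sub>v n"
  proof
    assume "u = 0\<^sub>v n"
    hence "u $ 0 = 0" using n by simp
    thus False using G_s_nz[OF G, of 0] n unfolding u_def by simp
  qed
  have gen: "K.span {u} = mat_kernel ?L"
  proof
    show "K.span {u} \<subseteq> mat_kernel ?L" using uK K.Ker.span_closed by blast
  next
    show "mat_kernel ?L \<subseteq> K.span {u}"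
    proof
      fix v assume vK: "v \<in> mat_kernel ?L"
      have vc: "v \<in> carrier_vec n" and vz: "?L *\<^sub>v v = 0\<^sub>v n" using mat_kernelD[OF Lc vK] by auto
      define y0 where "y0 = v $ 0 / cnj (s 0)"
      have "v = y0 \<cdot>\<^sub>v u"
      proof (rule eq_vecI)
        fix i assume "i < dim_vec (y0 \<cdot>\<^sub>v u)"
        hence i: "i < n" by (simp add: u_def)
        have "(0, i) \<in> {(a, b). a < n \<and> b < n \<and> adjacent E a b}\<^sup>*"
          using conn i n unfolding underlying_connected_def by auto
        from ker_const[OF G vc vz this] have "v $ i / cnj (s i) = y0" unfolding y0_def by simp
        thus "v $ i = (y0 \<cdot>\<^sub>v u) $ i" using G_s_nz[OF G i] i by (simp add: u_def field_simps)
      qed (use vc in \<open>auto simp: u_def\<close>)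
      also have "\<dots> = K.lincomb (\<lambda>_. y0) {u}" by (rule lincomb_single[OF Lc uK, symmetric])
      also have "\<dots> \<in> K.span {u}" unfolding K.Ker.span_def by auto
      finally show "v \<in> K.span {u}" .
    qed
  qed
  have "K.dim = 1" by (rule K.Ker.dim1I[OF gen]) (use un uK in auto)
  thus ?thesis by simp
qed

lemma disconnected_dim:
  assumes G: "vw_complex_digraph n E w s" and nconn: "\<not> underlying_connected n E"
  shows "kernel_dim (laplacian n E w s) \<noteq> 1"
proof
  assume d1: "kernel_dim (laplacian n E w s) = 1"
  let ?L = "laplacian n E w s"
  let ?R = "{(a, b). a < n \<and> b < n \<and> adjacent E a b}"
  have Lc: "?L \<in> carrier_mat n n" by (rule L_carrier)
  interpret K: kernel n n ?L by unfold_locales (rule Lc)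
  from nconn obtain i j where i: "i < n" and j: "j < n" and nij: "(i, j) \<notin> ?R\<^sup>*"
    unfolding underlying_connected_def by auto
  define P where "P k = ((i, k) \<in> ?R\<^sup>*)" for k
  have Pi: "P i" unfolding P_def by simp
  have Pj: "\<not> P j" unfolding P_def using nij by simp
  have Padj: "P a = P b" if "a < n" "b < n" "adjacent E a b" for a b
  proof -
    have "(a, b) \<in> ?R" "(b, a) \<in> ?R" using that adj_sym[of E a b] by auto
    thus ?thesis unfolding P_def by (meson rtrancl.rtrancl_into_rtrancl)
  qed
  define v1 where "v1 = vec n (\<lambda>k. if P k then cnj (s k) else 0)"
  define v2 where "v2 = vec n (\<lambda>k. if P k then 0 else cnj (s k))"
  have v1c: "v1 \<in> carrier_vec n" and v2c: "v2 \<in> carrier_vec n" unfolding v1_def v2_def by auto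
  have "?L *\<^sub>v v1 = 0\<^sub>v n"
    using G_s_nz[OF G] Padj by (subst L_ker[OF G v1c]) (auto simp: v1_def)
  hence v1K: "v1 \<in> mat_kernel ?L" by (rule mat_kernelI[OF Lc v1c])
  have "?L *\<^sub>v v2 = 0\<^sub>v n"
    using G_s_nz[OF G] Padj by (subst L_ker[OF G v2c]) (auto simp: v2_def)
  hence v2K: "v2 \<in> mat_kernel ?L" by (rule mat_kernelI[OF Lc v2c])
  from kernel_basis_exists[OF Lc] obtain B where fB: "finite B" and bB: "K.basis B" by auto
  have "K.dim = card B" by (rule K.Ker.dim_basis[OF fB bB])
  with d1 have "card B = 1" by simp
  then obtain b where Bb: "B = {b}" by (rule card_1_singletonE)
  from bB[unfolded Bb K.Ker.basis_def] have spb: "K.span {b} = mat_kernel ?L" and bK: "b \<in> mat_kernel ?L"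
    by auto
  have mult: "\<exists>c. v = c \<cdot>\<^sub>v b \<and> v \<noteq> 0\<^sub>v n" if vK: "v \<in> mat_kernel ?L" and vnz: "v \<noteq> 0\<^sub>v n" for v
  proof -
    from vK spb have "v \<in> K.span {b}" by simp
    then obtain a A where v: "v = K.lincomb a A" and A: "A \<subseteq> {b}" unfolding K.Ker.span_def by auto
    show ?thesis
    proof (cases "A = {}")
      case True
      hence "v = 0\<^sub>v n" using v by simp
      with vnz show ?thesis by simp
    next
      case False
      with A have "A = {b}" by auto
      with v lincomb_single[OF Lc bK] have "v = a b \<cdot>\<^sub>v b" by simp
      with vnz show ?thesis by blast
    qed
  qed
  have v1nz: "v1 \<noteq> 0\<^sub>v n"
  proof
    assume "v1 = 0\<^sub>v n" hence "v1 $ i = 0" using i by simp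
    thus False using Pi i G_s_nz[OF G i] unfolding v1_def by simp
  qed
  have v2nz: "v2 \<noteq> 0\<^sub>v n"
  proof
    assume "v2 = 0\<^sub>v n" hence "v2 $ j = 0" using j by simp
    thus False using Pj j G_s_nz[OF G j] unfolding v2_def by simp
  qed
  obtain c1 where c1: "v1 = c1 \<cdot>\<^sub>v b" using mult[OF v1K v1nz] by blast
  obtain c2 where c2: "v2 = c2 \<cdot>\<^sub>v b" using mult[OF v2K v2nz] by blast
  have bc: "b \<in> carrier_vec n" using bK Lc mat_kernelD(1) by blast
  have "v1 $ i = c1 * b $ i" using c1 i bc by simp
  moreover have "v1 $ i = cnj (s i)" using Pi i unfolding v1_def by simp
  ultimately have e: "c1 * b $ i = cnj (s i)" by simp
  have "c1 * b $ i \<noteq> 0" unfolding e using G_s_nz[OF G i] by simp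
  hence c1nz: "c1 \<noteq> 0" by auto
  have "v1 $ j = c1 * b $ j" using c1 j bc by simp
  hence "c1 * b $ j = 0" using Pj j unfolding v1_def by simp
  hence bj: "b $ j = 0" using c1nz by simp
  have "v2 $ j = c2 * b $ j" using c2 j bc by simp
  hence "v2 $ j = 0" using bj by simp
  thus False using Pj j G_s_nz[OF G j] unfolding v2_def by simp
qed


lemma L_ker2:
  assumes G: "vw_complex_digraph n E w s"
  shows "mat_kernel (laplacian n E w s * laplacian n E w s) = mat_kernel (laplacian n E w s)"
proof
  let ?L = "laplacian n E w s"
  have Lc: "?L \<in> carrier_mat n n" by (rule L_carrier)
  show "mat_kernel ?L \<subseteq> mat_kernel (?L * ?L)" by (rule mat_kernel_mult_subset[OF Lc Lc])
  show "mat_kernel (?L * ?L) \<subseteq> mat_kernel ?L"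
  proof
    fix v assume "v \<in> mat_kernel (?L * ?L)"
    hence vc: "v \<in> carrier_vec n" and vz: "(?L * ?L) *\<^sub>v v = 0\<^sub>v n"
      using mat_kernelD[of "?L * ?L" n n v] Lc by auto
    have "?L *\<^sub>v (?L *\<^sub>v v) = 0\<^sub>v n" using vz assoc_mult_mat_vec[OF Lc Lc vc] by simp
    moreover have herm: "\<And>i j. i < n \<Longrightarrow> j < n \<Longrightarrow> ?L $$ (i,j) = cnj (?L $$ (j,i))"
      using L_herm[OF G] by blast
    ultimately have "?L *\<^sub>v v = 0\<^sub>v n" using herm_ker2[OF Lc herm vc] by blast
    thus "v \<in> mat_kernel ?L" by (rule mat_kernelI[OF Lc vc])
  qed
qed

theorem theorem2p6:
  fixes n :: nat and E :: "(nat \<times> nat) set" and w s :: "nat \<Rightarrow> complex"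
  assumes "n \<ge> 1"
    and "vw_complex_digraph n E w s"
  shows "underlying_connected n E \<longleftrightarrow> alg_multiplicity (laplacian n E w s) 0 = 1"
proof -
  have "alg_multiplicity (laplacian n E w s) 0 = kernel_dim (laplacian n E w s)"
    unfolding alg_multiplicity_def
    by (rule order_eq_kernel_dim[OF L_carrier L_ker2[OF assms(2)]])
  thus ?thesis using connected_dim[OF assms(2) assms(1)] disconnected_dim[OF assms(2)] by auto
qed

end
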